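(* Let $\lambda\in(\frac16,\frac56)$ and $n\ge0$. For all $x\in[0,1]\setminus\mathcal E$, $$|F^\lambda(x)-F^\lambda(a_n(x))|\ge|m_n(x)|\,|x-a_n(x)|.$$
   Context: Construction: $F^\lambda_0\equiv0$ on $[0,1]$. Given $F^\lambda_n$ with its $4^n$ closed intervals of generation $n$ (covering $[0,1]$, disjoint interiors, $F^\lambda_n$ affine on each), on each interval $[a,b]$ of generation $n$, with $\ell=b-a$ and slope $m$, $F^\lambda_{n+1}$ coincides with $F^\lambda_n$ at $a,a+\ell/3,a+2\ell/3,b$, equals $F^\lambda_n(a+\ell/2)+\lambda\ell\sqrt{1+m^2}$ at $a+\ell/2$, and is affine on $[a,a+\ell/3],[a+\ell/3,a+\ell/2],[a+\ell/2,a+2\ell/3],[a+2\ell/3,b]$. $F^\lambda=\lim_nF^\lambda_n$. Dynamics: $T(x)=3x$ on $[0,\frac13)$, $6x-2$ on $[\frac13,\frac12)$, $4-6x$ on $[\frac12,\frac23)$, $3x-2$ on $[\frac23,1]$; $U(x)=0,1,2,3$ and $\widetilde U(x)=0,\frac13,\frac23,\frac23$ on these intervals respectively; $u_n(x)=U(T^nx)$, $\widetilde u_n(x)=\widetilde U(T^nx)$; $\beta_i(x,n)=\#\{k<n:u_k(x)=i\}$, $\beta_{i,j}=\beta_i+\beta_j$; $\varepsilon_n(x)=(-1)^{\beta_2(x,n)}$, $\ell_n(x)=3^{-\beta_{0,3}(x,n)}6^{-\beta_{1,2}(x,n)}$, $a_0(x)=0$, $a_n(x)=\sum_{k=0}^{n-1}\widetilde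 u_k(x)\varepsilon_k(x)\ell_k(x)$. $\mathcal E$ is the set of $x$ whose digit sequence is eventually constantly $0$ or eventually constantly $3$; for $x\notin\mathcal E$, $m_n(x)$ is the slope of $F^\lambda_n$ at $x$. *)

theory Defs
  imports "HOL-Analysis.Analysis"
begin

text \<open>F_n is represented by its list of nodes (breakpoints) (x, F_n x), sorted by x,
  covering [0,1]; F_n is the affine interpolation of consecutive nodes.
  Each consecutive pair of nodes delimits one interval of generation n.\<close>

definition refine_seg :: "real \<Rightarrow> real \<times> real \<Rightarrow> real \<times> real \<Rightarrow> (real \<times> real) list" where
  "refine_seg lam p q =
     (let a = fst p; ya = snd p; b = fst q; yb = snd q; l = b - a; m = (yb - ya) / l in
      [(a, ya),
       (a + l/3, ya + m * (l/3)),
       (a + l/2, ya + m * (l/2) + lam * l * sqrt (1 + m\<^sup>2)),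
       (a + 2*l/3, ya + m * (2*l/3))])"

fun refine :: "real \<Rightarrow> (real \<times> real) list \<Rightarrow> (real \<times> real) list" where
  "refine lam [] = []"
| "refine lam [p] = [p]"
| "refine lam (p # q # rest) = refine_seg lam p q @ refine lam (q # rest)"

fun nodes :: "real \<Rightarrow> nat \<Rightarrow> (real \<times> real) list" where
  "nodes lam 0 = [(0, 0), (1, 0)]"
| "nodes lam (Suc n) = refine lam (nodes lam n)"

fun interp :: "(real \<times> real) list \<Rightarrow> real \<Rightarrow> real" where
  "interp [] x = 0"
| "interp [p] x = snd p"
| "interp (p # q # rest) x =
     (if x \<le> fst q then snd p + (snd q - snd p) / (fst q - fst p) * (x - fst p)
      else interp (q # rest) x)"

definition Fn :: "real \<Rightarrow> nat \<Rightarrow> real \<Rightarrow> real" where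
  "Fn lam n x = interp (nodes lam n) x"

definition F :: "real \<Rightarrow> real \<Rightarrow> real" where
  "F lam x = lim (\<lambda>n. Fn lam n x)"

text \<open>m_n(x): slope of F_n at x (meaningful for x not in E, where x is interior
  to an interval of generation n).\<close>
definition slope_n :: "real \<Rightarrow> nat \<Rightarrow> real \<Rightarrow> real" where
  "slope_n lam n x = deriv (Fn lam n) x"

definition T :: "real \<Rightarrow> real" where
  "T x = (if x < 1/3 then 3*x else if x < 1/2 then 6*x - 2
          else if x < 2/3 then 4 - 6*x else 3*x - 2)"

definition U :: "real \<Rightarrow> nat" where
  "U x = (if x < 1/3 then 0 else if x < 1/2 then 1 else if x < 2/3 then 2 else 3)"

definition Ut :: "real \<Rightarrow> real" where
  "Ut x = (if x < 1/3 then 0 else if x < 1/2 then 1/3 else if x < 2/3 then 2/3 else 2/3)"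

definition u :: "nat \<Rightarrow> real \<Rightarrow> nat" where
  "u n x = U ((T ^^ n) x)"

definition ut :: "nat \<Rightarrow> real \<Rightarrow> real" where
  "ut n x = Ut ((T ^^ n) x)"

definition beta :: "nat \<Rightarrow> real \<Rightarrow> nat \<Rightarrow> nat" where
  "beta i x n = card {k. k < n \<and> u k x = i}"

definition eps :: "real \<Rightarrow> nat \<Rightarrow> real" where
  "eps x n = (-1) ^ beta 2 x n"

definition ell :: "real \<Rightarrow> nat \<Rightarrow> real" where
  "ell x n = 1 / (3 ^ (beta 0 x n + beta 3 x n) * 6 ^ (beta 1 x n + beta 2 x n))"

definition a :: "nat \<Rightarrow> real \<Rightarrow> real" where
  "a n x = (\<Sum>k<n. ut k x * eps x k * ell x k)"

definition E :: "real set" where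
  "E = {x. (\<exists>N. \<forall>k\<ge>N. u k x = 0) \<or> (\<exists>N. \<forall>k\<ge>N. u k x = 3)}"

end

theory Submission
  imports Defs
begin

lemma refine_nonempty: "L \<noteq> [] \<Longrightarrow> refine lam L \<noteq> [] \<and> hd (refine lam L) = hd L"
  by (induction lam L rule: refine.induct) (auto simp: refine_seg_def Let_def)

lemma refine_last: "L \<noteq> [] \<Longrightarrow> last (refine lam L) = last L"
proof (induction lam L rule: refine.induct)
  case (3 lam p q rest)
  have "refine lam (q # rest) \<noteq> []" using refine_nonempty by blast
  then show ?case using 3 by (simp add: refine_seg_def Let_def)
qed auto

lemma refine_length: "length (refine lam L) \<ge> length L"
  by (induction lam L rule: refine.induct) (auto simp: refine_seg_def Let_def)

lemma refine_join:
  "L1 \<noteq> [] \<Longrightarrow> L2 \<noteq> [] \<Longrightarrow> last L1 = hd L2 \<Longrightarrow>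
   refine lam (butlast L1 @ L2) = butlast (refine lam L1) @ refine lam L2"
proof (induction lam L1 rule: refine.induct)
  case (1 lam)
  then show ?case by simp
next
  case (2 lam p)
  then show ?case by simp
next
  case (3 lam p q rest)
  have ne: "refine lam (q # rest) \<noteq> []" using refine_nonempty by blast
  have IH: "refine lam (butlast (q # rest) @ L2) = butlast (refine lam (q # rest)) @ refine lam L2"
    using 3 by simp
  obtain X where X: "butlast (q # rest) @ L2 = q # X"
  proof (cases rest)
    case Nil
    then have "L2 = q # tl L2" using 3 by (cases L2) auto
    then show ?thesis using that Nil by simp
  next
    case (Cons r rs)
    then show ?thesis using that by simp
  qed
  have "refine lam (butlast (p # q # rest) @ L2) = refine lam (p # q # X)"
    using X by simp
  also have "\<dots> = refine_seg lam p q @ refine lam (q # X)" by simp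
  also have "\<dots> = refine_seg lam p q @ butlast (refine lam (q # rest)) @ refine lam L2"
    using IH X by simp
  also have "\<dots> = butlast (refine lam (p # q # rest)) @ refine lam L2"
    using ne by (simp add: butlast_append)
  finally show ?case .
qed

lemma refinep_props: "L \<noteq> [] \<Longrightarrow> (refine lam ^^ n) L \<noteq> [] \<and> hd ((refine lam ^^ n) L) = hd L
   \<and> last ((refine lam ^^ n) L) = last L \<and> length ((refine lam ^^ n) L) \<ge> length L"
proof (induction n)
  case (Suc n)
  then show ?case using refine_nonempty[where L="(refine lam ^^ n) L" and lam=lam]
      refine_last[where L="(refine lam ^^ n) L" and lam=lam] refine_length[where L="(refine lam ^^ n) L" and lam=lam]
    by auto
qed simp

lemma refinep_join:
  "L1 \<noteq> [] \<Longrightarrow> L2 \<noteq> [] \<Longrightarrow> last L1 = hd L2 \<Longrightarrow>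
   (refine lam ^^ n) (butlast L1 @ L2) = butlast ((refine lam ^^ n) L1) @ (refine lam ^^ n) L2"
proof (induction n)
  case (Suc n)
  have "(refine lam ^^ Suc n) (butlast L1 @ L2) = refine lam (butlast ((refine lam ^^ n) L1) @ (refine lam ^^ n) L2)"
    using Suc by simp
  also have "\<dots> = butlast ((refine lam ^^ Suc n) L1) @ (refine lam ^^ Suc n) L2"
    using refine_join refinep_props Suc.prems by simp
  finally show ?case .
qed simp

lemma interp_split:
  "length L1 \<ge> 2 \<Longrightarrow> L2 \<noteq> [] \<Longrightarrow> last L1 = hd L2 \<Longrightarrow> (\<forall>z\<in>set L1. fst z \<le> fst (last L1)) \<Longrightarrow>
   interp (butlast L1 @ L2) y = (if y \<le> fst (last L1) then interp L1 y else interp L2 y)"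
proof (induction L1 y rule: interp.induct)
  case (3 p q rest y)
  show ?case
  proof (cases rest)
    case Nil
    then obtain X where "L2 = q # X" using 3 by (cases L2) auto
    then show ?thesis using Nil 3 by (cases "y \<le> fst q") auto
  next
    case (Cons r rs)
    have "fst q \<le> fst (last (p#q#rest))" using "3.prems"(4) by simp
    have lq: "fst q \<le> fst (last (q#rest))" using \<open>fst q \<le> fst (last (p#q#rest))\<close> by simp
    have bl: "butlast (p # q # rest) @ L2 = p # (butlast (q # rest) @ L2)" by simp
    have bl2: "butlast (q # rest) @ L2 = q # (butlast rest @ L2)" using Cons by simp
    show ?thesis
    proof (cases "y \<le> fst q")
      case True
      then show ?thesis using lq bl bl2 by simp
    next
      case False
      have IH: "interp (butlast (q # rest) @ L2) y = (if y \<le> fst (last (q#rest)) then interp (q#rest) y else interp L2 y)"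
        using 3 Cons False by auto
      have "interp (butlast (p # q # rest) @ L2) y = interp (butlast (q # rest) @ L2) y"
        using False bl bl2 by simp
      then show ?thesis using IH False by simp
    qed
  qed
qed auto

fun Phi :: "real \<Rightarrow> nat \<Rightarrow> real \<Rightarrow> real \<Rightarrow> real" where
  "Phi lam 0 m t = m * t"
| "Phi lam (Suc n) m t =
    (if t \<le> 1/3 then Phi lam n m (3*t) / 3
     else if t \<le> 1/2 then m/3 + Phi lam n (m + 6*lam* sqrt(1+m^2)) (6*t-2) / 6
     else if t \<le> 2/3 then m/2 + lam* sqrt(1+m^2) + Phi lam n (m - 6*lam* sqrt(1+m^2)) (6*t-3) / 6
     else 2*m/3 + Phi lam n m (3*t-2) / 3)"

declare Phi.simps(2)[simp del]

lemma decomp: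
  fixes xl yl xr yr lam :: real
  defines "l \<equiv> xr - xl" and "m \<equiv> (yr - yl) / (xr - xl)"
  defines "P1 \<equiv> (xl + l/3, yl + m*(l/3))"
    and "P2 \<equiv> (xl + l/2, yl + m*(l/2) + lam*l* sqrt(1+m^2))"
    and "P3 \<equiv> (xl + 2*l/3, yl + m*(2*l/3))"
  shows "(refine lam ^^ Suc n) [(xl,yl),(xr,yr)] =
     butlast ((refine lam ^^ n) [(xl,yl),P1]) @ butlast ((refine lam ^^ n) [P1,P2])
     @ butlast ((refine lam ^^ n) [P2,P3]) @ (refine lam ^^ n) [P3,(xr,yr)]"
proof -
  have r: "refine lam [(xl,yl),(xr,yr)] =
     butlast [(xl,yl),P1] @ (butlast [P1,P2] @ (butlast [P2,P3] @ [P3,(xr,yr)]))"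
  proof -
    have "refine_seg lam (xl,yl) (xr,yr) = [(xl,yl),P1,P2,P3]"
      unfolding refine_seg_def Let_def fst_conv snd_conv m_def[symmetric]
      unfolding l_def[symmetric] P1_def P2_def P3_def by simp
    then show ?thesis by simp
  qed
  have "(refine lam ^^ Suc n) [(xl,yl),(xr,yr)] = (refine lam ^^ n) (refine lam [(xl,yl),(xr,yr)])"
    by (simp only: funpow_Suc_right o_apply)
  also have "\<dots> = butlast ((refine lam ^^ n) [(xl,yl),P1]) @
     (refine lam ^^ n) (butlast [P1,P2] @ (butlast [P2,P3] @ [P3,(xr,yr)]))"
    unfolding r by (rule refinep_join) auto
  also have "(refine lam ^^ n) (butlast [P1,P2] @ (butlast [P2,P3] @ [P3,(xr,yr)]))
     = butlast ((refine lam ^^ n) [P1,P2]) @ (refine lam ^^ n) (butlast [P2,P3] @ [P3,(xr,yr)])"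
    by (rule refinep_join) auto
  also have "(refine lam ^^ n) (butlast [P2,P3] @ [P3,(xr,yr)])
     = butlast ((refine lam ^^ n) [P2,P3]) @ (refine lam ^^ n) [P3,(xr,yr)]"
    by (rule refinep_join) auto
  finally show ?thesis by simp
qed

lemma range_refine: "xl \<le> xr \<Longrightarrow> z \<in> set ((refine lam ^^ n) [(xl,yl),(xr,yr)]) \<Longrightarrow> xl \<le> fst z \<and> fst z \<le> xr"
proof (induction n arbitrary: xl yl xr yr z)
  case 0
  then show ?case by auto
next
  case (Suc n)
  define l where "l = xr - xl"
  define m where "m = (yr - yl) / (xr - xl)"
  define P1 where "P1 = (xl + l/3, yl + m*(l/3))"
  define P2 where "P2 = (xl + l/2, yl + m*(l/2) + lam*l* sqrt(1+m^2))"
  define P3 where "P3 = (xl + 2*l/3, yl + m*(2*l/3))"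
  have l: "l \<ge> 0" using Suc.prems l_def by simp
  have dec: "(refine lam ^^ Suc n) [(xl,yl),(xr,yr)] =
     butlast ((refine lam ^^ n) [(xl,yl),P1]) @ butlast ((refine lam ^^ n) [P1,P2])
     @ butlast ((refine lam ^^ n) [P2,P3]) @ (refine lam ^^ n) [P3,(xr,yr)]"
    unfolding P1_def P2_def P3_def l_def m_def by (rule decomp)
  have "z \<in> set ((refine lam ^^ n) [(xl,yl),P1]) \<or> z \<in> set ((refine lam ^^ n) [P1,P2])
     \<or> z \<in> set ((refine lam ^^ n) [P2,P3]) \<or> z \<in> set ((refine lam ^^ n) [P3,(xr,yr)])"
    using Suc.prems(2) unfolding dec set_append by (auto dest: in_set_butlastD)
  then show ?case
  proof (elim disjE)
    assume "z \<in> set ((refine lam ^^ n) [(xl,yl),P1])"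
    then have "z \<in> set ((refine lam ^^ n) [(xl,yl),(xl + l/3, snd P1)])" using P1_def by simp
    then have "xl \<le> fst z \<and> fst z \<le> xl + l/3" by (rule Suc.IH[rotated]) (use l in simp)
    then show ?thesis using l l_def by (elim conjE; intro conjI; linarith)
  next
    assume "z \<in> set ((refine lam ^^ n) [P1,P2])"
    then have "z \<in> set ((refine lam ^^ n) [(xl + l/3, snd P1),(xl + l/2, snd P2)])" using P1_def P2_def by simp
    then have "xl + l/3 \<le> fst z \<and> fst z \<le> xl + l/2" by (rule Suc.IH[rotated]) (use l in simp)
    then show ?thesis using l l_def by (elim conjE; intro conjI; linarith)
  next
    assume "z \<in> set ((refine lam ^^ n) [P2,P3])"
    then have "z \<in> set ((refine lam ^^ n) [(xl + l/2, snd P2),(xl + 2*l/3, snd P3)])" using P3_def P2_def by simp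
    then have "xl + l/2 \<le> fst z \<and> fst z \<le> xl + 2*l/3" by (rule Suc.IH[rotated]) (use l in simp)
    then show ?thesis using l l_def by (elim conjE; intro conjI; linarith)
  next
    assume "z \<in> set ((refine lam ^^ n) [P3,(xr,yr)])"
    then have "z \<in> set ((refine lam ^^ n) [(xl + 2*l/3, snd P3),(xr,yr)])" using P3_def by simp
    then have "xl + 2*l/3 \<le> fst z \<and> fst z \<le> xr" by (rule Suc.IH[rotated]) (use l l_def in linarith)
    then show ?thesis using l l_def by (elim conjE; intro conjI; linarith)
  qed
qed

lemma range_refine': "fst p \<le> fst q \<Longrightarrow> z \<in> set ((refine lam ^^ n) [p,q]) \<Longrightarrow> fst p \<le> fst z \<and> fst z \<le> fst q"
  using range_refine[where xl="fst p" and xr="fst q" and z=z and lam=lam and n=n and yl="snd p" and yr="snd q"] by simp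

lemma hd_butlast_app: "length L \<ge> 2 \<Longrightarrow> hd (butlast L @ X) = hd L"
  by (cases L) auto

lemma refinep2: "length ((refine lam ^^ n) [p,q]) \<ge> 2 \<and> hd ((refine lam ^^ n) [p,q]) = p
   \<and> last ((refine lam ^^ n) [p,q]) = q"
  using refinep_props[where L="[p,q]" and lam=lam and n=n] by simp

lemma interp_Phi: "xl < xr \<Longrightarrow> 0 \<le> t \<Longrightarrow> t \<le> 1 \<Longrightarrow>
  interp ((refine lam ^^ n) [(xl,yl),(xr,yr)]) (xl + (xr-xl)*t) = yl + (xr-xl) * Phi lam n ((yr-yl)/(xr-xl)) t"
proof (induction n arbitrary: xl yl xr yr t)
  case 0
  have "(xr-xl)*t \<le> (xr-xl)*1" using 0 by (intro mult_left_mono) auto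
  then have "xl + (xr-xl)*t \<le> xr" by simp
  then show ?case using 0 by (simp add: field_simps)
next
  case (Suc n)
  have IH: "interp ((refine lam ^^ n) [p,q]) (fst p + (fst q - fst p)*t') = snd p + (fst q - fst p) * Phi lam n ((snd q - snd p)/(fst q - fst p)) t'"
    if "fst p < fst q" "0 \<le> t'" "t' \<le> 1" for p q t'
    using Suc.IH[where xl="fst p" and xr="fst q" and t=t' and yl="snd p" and yr="snd q"] that by simp
  define l where "l = xr - xl"
  define m where "m = (yr - yl) / (xr - xl)"
  define P1 where "P1 = (xl + l/3, yl + m*(l/3))"
  define P2 where "P2 = (xl + l/2, yl + m*(l/2) + lam*l * sqrt(1+m^2))"
  define P3 where "P3 = (xl + 2*l/3, yl + m*(2*l/3))"
  define R1 where "R1 = (refine lam ^^ n) [(xl,yl),P1]"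
  define R2 where "R2 = (refine lam ^^ n) [P1,P2]"
  define R3 where "R3 = (refine lam ^^ n) [P2,P3]"
  define R4 where "R4 = (refine lam ^^ n) [P3,(xr,yr)]"
  define y where "y = xl + (xr-xl)*t"
  have l: "l > 0" using Suc.prems l_def by simp
  have hy: "yr = yl + m*l" using l unfolding m_def l_def by simp
  have hx: "xr = xl + l" unfolding l_def by simp
  have dec: "(refine lam ^^ Suc n) [(xl,yl),(xr,yr)] = butlast R1 @ (butlast R2 @ (butlast R3 @ R4))"
    unfolding R1_def R2_def R3_def R4_def P1_def P2_def P3_def l_def m_def by (rule decomp)
  have r1: "length R1 \<ge> 2" "hd R1 = (xl,yl)" "last R1 = P1" using refinep2 R1_def by auto
  have r2: "length R2 \<ge> 2" "hd R2 = P1" "last R2 = P2" using refinep2 R2_def by auto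
  have r3: "length R3 \<ge> 2" "hd R3 = P2" "last R3 = P3" using refinep2 R3_def by auto
  have r4: "length R4 \<ge> 2" "hd R4 = P3" "last R4 = (xr,yr)" using refinep2 R4_def by auto
  have g1: "\<forall>z\<in>set R1. fst z \<le> fst (last R1)"
    using range_refine'[of "(xl,yl)" P1] r1 l unfolding R1_def P1_def by simp
  have g2: "\<forall>z\<in>set R2. fst z \<le> fst (last R2)"
    using range_refine'[of P1 P2] r2 l unfolding R2_def P1_def P2_def by simp
  have g3: "\<forall>z\<in>set R3. fst z \<le> fst (last R3)"
    using range_refine'[of P2 P3] r3 l unfolding R3_def P3_def P2_def by simp
  have ne: "R4 \<noteq> []" "butlast R3 @ R4 \<noteq> []" "butlast R2 @ butlast R3 @ R4 \<noteq> []" using r4 by auto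
  have s3: "interp (butlast R3 @ R4) y = (if y \<le> fst P3 then interp R3 y else interp R4 y)"
    using interp_split[of R3 R4 y] r3 r4 g3 ne by simp
  have s2: "interp (butlast R2 @ butlast R3 @ R4) y = (if y \<le> fst P2 then interp R2 y else interp (butlast R3 @ R4) y)"
    using interp_split[of R2 "butlast R3 @ R4" y] r2 r3 g2 ne hd_butlast_app[of R3 R4] by simp
  have s1: "interp (butlast R1 @ butlast R2 @ butlast R3 @ R4) y = (if y \<le> fst P1 then interp R1 y else interp (butlast R2 @ butlast R3 @ R4) y)"
    using interp_split[of R1 "butlast R2 @ butlast R3 @ R4" y] r1 r2 g1 ne hd_butlast_app[of R2 "butlast R3 @ R4"] by simp
  have lhs: "interp ((refine lam ^^ Suc n) [(xl,yl),(xr,yr)]) (xl + (xr-xl)*t) =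
     (if t \<le> 1/3 then interp R1 y else if t \<le> 1/2 then interp R2 y else if t \<le> 2/3 then interp R3 y else interp R4 y)"
  proof -
    have "(y \<le> fst P1) = (l*t \<le> l*(1/3))" unfolding y_def P1_def l_def[symmetric] by simp
    then have c1: "(y \<le> fst P1) = (t \<le> 1/3)" using l by simp
    have "(y \<le> fst P2) = (l*t \<le> l*(1/2))" unfolding y_def P2_def l_def[symmetric] by simp
    then have c2: "(y \<le> fst P2) = (t \<le> 1/2)" using l by simp
    have "(y \<le> fst P3) = (l*t \<le> l*(2/3))" unfolding y_def P3_def l_def[symmetric] by (simp add: mult.commute)
    then have c3: "(y \<le> fst P3) = (t \<le> 2/3)" using l by simp
    show ?thesis unfolding dec y_def[symmetric] using s1 s2 s3 c1 c2 c3 by simp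
  qed
  have rhs: "yl + (xr-xl) * Phi lam (Suc n) ((yr-yl)/(xr-xl)) t = yl + l * Phi lam (Suc n) m t"
    unfolding l_def m_def ..
  show ?case
  proof (cases "t \<le> 1/3")
    case True
    have e: "y = fst (xl,yl) + (fst P1 - fst (xl,yl)) * (3*t)" unfolding y_def P1_def l_def by simp
    have s: "(snd P1 - snd (xl,yl)) / (fst P1 - fst (xl,yl)) = m" unfolding P1_def using l by simp
    have "interp R1 y = yl + l/3 * Phi lam n m (3*t)"
      unfolding R1_def e using IH[of "(xl,yl)" P1 "3*t"] s True Suc.prems l unfolding P1_def by simp
    then show ?thesis using lhs rhs True by (simp add: Phi.simps(2))
  next
    case F1: False
    show ?thesis
    proof (cases "t \<le> 1/2")
      case True
      have e: "y = fst P1 + (fst P2 - fst P1) * (6*t-2)" unfolding y_def P1_def P2_def l_def by (simp add: field_simps)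
      have s: "(snd P2 - snd P1) / (fst P2 - fst P1) = m + 6*lam * sqrt(1+m^2)" unfolding P1_def P2_def using l by (simp add: field_simps)
      have "interp R2 y = yl + m*(l/3) + l/6 * Phi lam n (m + 6*lam * sqrt(1+m^2)) (6*t-2)"
        unfolding R2_def e using IH[of P1 P2 "6*t-2"] s True F1 l unfolding P1_def P2_def by simp
      then show ?thesis using lhs rhs True F1 by (simp add: Phi.simps(2) algebra_simps)
    next
      case F2: False
      show ?thesis
      proof (cases "t \<le> 2/3")
        case True
        have e: "y = fst P2 + (fst P3 - fst P2) * (6*t-3)" unfolding y_def P3_def P2_def l_def by (simp add: field_simps)
        have s: "(snd P3 - snd P2) / (fst P3 - fst P2) = m - 6*lam * sqrt(1+m^2)" unfolding P3_def P2_def using l by (simp add: field_simps)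
        have "interp R3 y = yl + m*(l/2) + lam*l * sqrt(1+m^2) + l/6 * Phi lam n (m - 6*lam * sqrt(1+m^2)) (6*t-3)"
          unfolding R3_def e using IH[of P2 P3 "6*t-3"] s True F2 l unfolding P3_def P2_def by simp
        then show ?thesis using lhs rhs True F1 F2 by (simp add: Phi.simps(2) algebra_simps)
      next
        case F3: False
        have e: "y = fst P3 + (fst (xr,yr) - fst P3) * (3*t-2)" unfolding y_def P3_def l_def by (simp add: field_simps)
        have s: "(snd (xr,yr) - snd P3) / (fst (xr,yr) - fst P3) = m" unfolding P3_def using l by (simp add: hy hx field_simps)
        have d: "fst (xr,yr) - fst P3 = l/3" unfolding P3_def by (simp add: hx)
        have i4: "interp R4 (fst P3 + (fst (xr,yr) - fst P3)*(3*t-2)) = snd P3 + (fst (xr,yr) - fst P3) * Phi lam n ((snd (xr,yr) - snd P3)/(fst (xr,yr) - fst P3)) (3*t-2)"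
          unfolding R4_def by (rule IH) (use d l F3 Suc.prems in auto)
        have "interp R4 y = yl + m*(2*l/3) + l/3 * Phi lam n m (3*t-2)"
        proof -
          have "interp R4 y = snd P3 + (fst (xr,yr) - fst P3) * Phi lam n m (3*t-2)"
            using i4 unfolding s e[symmetric] .
          then show ?thesis unfolding d by (simp add: P3_def)
        qed
        then show ?thesis using lhs rhs F1 F2 F3 by (simp add: Phi.simps(2) algebra_simps)
      qed
    qed
  qed
qed

lemma nodes_pow: "nodes lam n = (refine lam ^^ n) [(0,0),(1,0)]"
  by (induction n) auto

lemma Fn_Phi: "0 \<le> y \<Longrightarrow> y \<le> 1 \<Longrightarrow> Fn lam n y = Phi lam n 0 y"
  using interp_Phi[where xl=0 and xr=1 and t=y and lam=lam and n=n and yl=0 and yr=0]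
  by (simp add: Fn_def nodes_pow)

lemma Phi_01: "Phi lam n m 0 = 0 \<and> Phi lam n m 1 = m"
  by (induction n arbitrary: m) (auto simp: Phi.simps(2))

lemma Phi_r1: "t \<le> 1/3 \<Longrightarrow> Phi lam (Suc n) m t = Phi lam n m (3*t) / 3"
  by (simp add: Phi.simps(2))

lemma Phi_r2: assumes "1/3 \<le> t" "t \<le> 1/2" shows "
  Phi lam (Suc n) m t = m/3 + Phi lam n (m + 6*lam * sqrt(1+m^2)) (6*t-2) / 6"
proof (cases "t = 1/3")
  case True
  show ?thesis unfolding True by (simp add: Phi.simps(2) Phi_01 field_simps)
qed (use assms in \<open>auto simp: Phi.simps(2)\<close>)

lemma Phi_r3: assumes "1/2 \<le> t" "t \<le> 2/3" shows "
  Phi lam (Suc n) m t = m/2 + lam * sqrt(1+m^2) + Phi lam n (m - 6*lam * sqrt(1+m^2)) (6*t-3) / 6"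
proof (cases "t = 1/2")
  case True
  show ?thesis unfolding True by (simp add: Phi.simps(2) Phi_01 field_simps)
qed (use assms in \<open>auto simp: Phi.simps(2)\<close>)

lemma Phi_r4: assumes "2/3 \<le> t" shows "
  Phi lam (Suc n) m t = 2*m/3 + Phi lam n m (3*t-2) / 3"
proof (cases "t = 2/3")
  case True
  show ?thesis unfolding True by (simp add: Phi.simps(2) Phi_01 field_simps)
qed (use assms in \<open>auto simp: Phi.simps(2)\<close>)

lemma Phi_sym: "0 \<le> t \<Longrightarrow> t \<le> 1 \<Longrightarrow> Phi lam n m (1-t) = m + Phi lam n (-m) t"
proof (induction n arbitrary: m t)
  case 0
  then show ?case by (simp add: algebra_simps)
next
  case (Suc n)
  define S where "S = lam * sqrt(1+m^2)"
  have S': "sqrt(1+(-m)^2) = sqrt(1+m^2)" by simp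
  show ?case
  proof (cases "t \<le> 1/3")
    case True
    have "Phi lam (Suc n) m (1-t) = 2*m/3 + Phi lam n m (3*(1-t)-2) / 3" using True by (intro Phi_r4) auto
    also have "3*(1-t)-2 = 1 - 3*t" by simp
    also have "Phi lam n m (1 - 3*t) = m + Phi lam n (-m) (3*t)" using Suc True by (intro Suc.IH) auto
    finally show ?thesis using True by (simp add: Phi_r1 field_simps)
  next
    case F1: False
    show ?thesis
    proof (cases "t \<le> 1/2")
      case True
      have "Phi lam (Suc n) m (1-t) = m/2 + S + Phi lam n (m - 6*S) (6*(1-t)-3) / 6"
        using True F1 Phi_r3[where t="1-t" and n=n and lam=lam and m=m] unfolding S_def by (simp add: mult.assoc)
      also have "6*(1-t)-3 = 1 - (6*t-2)" by simp
      also have "Phi lam n (m - 6*S) (1 - (6*t-2)) = (m - 6*S) + Phi lam n (-(m - 6*S)) (6*t-2)"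
        using True F1 by (intro Suc.IH) auto
      also have "Phi lam (Suc n) (-m) t = -m/3 + Phi lam n (-m + 6*S) (6*t-2) / 6"
        using True F1 Phi_r2[where t=t and n=n and lam=lam and m="-m"] S' unfolding S_def by (simp add: mult.assoc)
      ultimately show ?thesis by (simp add: field_simps)
    next
      case F2: False
      show ?thesis
      proof (cases "t \<le> 2/3")
        case True
        have "Phi lam (Suc n) m (1-t) = m/3 + Phi lam n (m + 6*S) (6*(1-t)-2) / 6"
          using True F2 Phi_r2[where t="1-t" and n=n and lam=lam and m=m] unfolding S_def by (simp add: mult.assoc)
        also have "6*(1-t)-2 = 1 - (6*t-3)" by simp
        also have "Phi lam n (m + 6*S) (1 - (6*t-3)) = (m + 6*S) + Phi lam n (-(m + 6*S)) (6*t-3)"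
          using True F2 by (intro Suc.IH) auto
        also have "Phi lam (Suc n) (-m) t = -m/2 + S + Phi lam n (-m - 6*S) (6*t-3) / 6"
          using True F2 Phi_r3[where t=t and n=n and lam=lam and m="-m"] S' unfolding S_def by (simp add: mult.assoc)
        ultimately show ?thesis by (simp add: field_simps)
      next
        case F3: False
        have "Phi lam (Suc n) m (1-t) = Phi lam n m (3*(1-t)) / 3"
          using F3 by (intro Phi_r1) auto
        also have "3*(1-t) = 1 - (3*t-2)" by simp
        also have "Phi lam n m (1 - (3*t-2)) = m + Phi lam n (-m) (3*t-2)"
          using F3 Suc.prems by (intro Suc.IH) auto
        also have "Phi lam (Suc n) (-m) t = -2*m/3 + Phi lam n (-m) (3*t-2) / 3"
          using F3 Phi_r4[where t=t and n=n and lam=lam and m="-m"] by simp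
        ultimately show ?thesis by (simp add: field_simps)
      qed
    qed
  qed
qed

lemma sqrt_tri: "sqrt(1+(m+c)^2) \<le> sqrt(1+m^2) + \<bar>c\<bar>"
proof -
  have am: "\<bar>m\<bar> \<le> sqrt(1+m^2)"
    using real_sqrt_le_mono[of "m^2" "1+m^2"] by simp
  have "m*c \<le> \<bar>m\<bar>*\<bar>c\<bar>" by (metis abs_ge_self abs_mult)
  also have "\<dots> \<le> sqrt(1+m^2)*\<bar>c\<bar>" using am by (simp add: mult_right_mono)
  finally have mc: "m*c \<le> sqrt(1+m^2)*\<bar>c\<bar>" .
  have sq: "(sqrt(1+m^2))^2 = 1+m^2" by simp
  have "1+(m+c)^2 \<le> (sqrt(1+m^2) + \<bar>c\<bar>)^2"
    using mc sq by (simp add: power2_eq_square algebra_simps)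
  then have "sqrt(1+(m+c)^2) \<le> sqrt((sqrt(1+m^2) + \<bar>c\<bar>)^2)" by (rule real_sqrt_le_mono)
  also have "\<dots> = sqrt(1+m^2) + \<bar>c\<bar>" by simp
  finally show ?thesis .
qed

definition rho :: "real \<Rightarrow> real" where "rho lam = max (1/3) (1/6 + lam)"

lemma Phi_inc:
  assumes lam: "0 \<le> lam"
  shows "0 \<le> y \<Longrightarrow> y \<le> 1 \<Longrightarrow> 0 \<le> Phi lam (Suc n) m y - Phi lam n m y \<and>
    Phi lam (Suc n) m y - Phi lam n m y \<le> lam * sqrt(1+m^2) * rho lam ^ n"
proof (induction n arbitrary: m y)
  case 0
  define S where "S = lam * sqrt(1+m^2)"
  have S: "S \<ge> 0" using lam S_def by simp
  have e6: "6 * lam * sqrt (1 + m\<^sup>2) = 6 * S" unfolding S_def by simp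
  show ?case
  proof (cases "y \<le> 1/3")
    case True then show ?thesis using S by (simp add: Phi.simps(2) S_def)
  next
    case F1: False
    show ?thesis
    proof (cases "y \<le> 1/2")
      case True
      have d: "Phi lam (Suc 0) m y - Phi lam 0 m y = S * (6*y-2)"
        using True F1 by (simp add: Phi.simps(2) S_def field_simps)
      have "S * (6*y-2) \<le> S * 1" using True S by (intro mult_left_mono) auto
      moreover have "0 \<le> S * (6*y-2)" using F1 S by simp
      ultimately show ?thesis using d S_def by simp
    next
      case F2: False
      show ?thesis
      proof (cases "y \<le> 2/3")
        case True
        have d: "Phi lam (Suc 0) m y - Phi lam 0 m y = S * (4-6*y)"
          using True F1 F2 by (simp add: Phi.simps(2) S_def field_simps)
        have "S * (4-6*y) \<le> S * 1" using F2 S by (intro mult_left_mono) auto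
        moreover have "0 \<le> S * (4-6*y)" using True S by simp
        ultimately show ?thesis using d S_def by simp
      next
        case F3: False
        then show ?thesis using S F1 F2 by (simp add: Phi.simps(2) S_def field_simps)
      qed
    qed
  qed
next
  case (Suc n)
  define Q where "Q = sqrt(1+m^2)"
  define r where "r = rho lam"
  have Q: "Q \<ge> 0" unfolding Q_def by simp
  have r: "1/3 \<le> r" "1/6 + lam \<le> r" "0 \<le> r" unfolding r_def rho_def by auto
  have rn: "0 \<le> r^n" using r by simp
  have key: "lam * sqrt(1+m'^2) * r^n / 6 \<le> lam * Q * r ^ Suc n"
    if m': "sqrt(1+m'^2) \<le> Q + 6*lam*Q" for m'
  proof -
    have "lam * sqrt(1+m'^2) * r^n / 6 \<le> lam * (Q + 6*lam*Q) * r^n / 6"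
      using m' lam rn by (intro divide_right_mono mult_right_mono mult_left_mono) auto
    also have "\<dots> = (lam * Q * r^n) * (1/6 + lam)" by (simp add: field_simps)
    also have "\<dots> \<le> (lam * Q * r^n) * r" using r lam Q rn by (intro mult_left_mono) auto
    finally show ?thesis by (simp add: mult.commute mult.left_commute)
  qed
  have m1: "sqrt(1+(m + 6*lam*Q)^2) \<le> Q + 6*lam*Q"
    using sqrt_tri[of m "6*lam*Q"] lam Q unfolding Q_def by simp
  have m2: "sqrt(1+(m - 6*lam*Q)^2) \<le> Q + 6*lam*Q"
    using sqrt_tri[of m "-(6*lam*Q)"] lam Q unfolding Q_def by simp
  have k3: "lam * Q * r^n / 3 \<le> lam * Q * r ^ Suc n"
  proof -
    have "lam * Q * r^n / 3 = (lam * Q * r^n) * (1/3)" by simp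
    also have "\<dots> \<le> (lam * Q * r^n) * r" using r lam Q rn by (intro mult_left_mono) auto
    finally show ?thesis by (simp add: mult.commute mult.left_commute)
  qed
  show ?case
  proof (cases "y \<le> 1/3")
    case True
    have "0 \<le> Phi lam (Suc n) m (3*y) - Phi lam n m (3*y) \<and>
      Phi lam (Suc n) m (3*y) - Phi lam n m (3*y) \<le> lam * Q * r ^ n"
      using Suc.IH[of "3*y" m] Suc.prems True unfolding Q_def r_def by auto
    then show ?thesis using True k3 unfolding Q_def[symmetric] r_def[symmetric]
      by (simp add: Phi.simps(2)[of lam "Suc n"] Phi.simps(2)[of lam n])
  next
    case F1: False
    show ?thesis
    proof (cases "y \<le> 1/2")
      case True
      have "0 \<le> Phi lam (Suc n) (m + 6*lam*Q) (6*y-2) - Phi lam n (m + 6*lam*Q) (6*y-2) \<and>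
        Phi lam (Suc n) (m + 6*lam*Q) (6*y-2) - Phi lam n (m + 6*lam*Q) (6*y-2) \<le> lam * sqrt(1+(m + 6*lam*Q)^2) * r ^ n"
        using Suc.IH[of "6*y-2" "m + 6*lam*Q"] Suc.prems True F1 unfolding r_def by auto
      then show ?thesis using True F1 key[OF m1] unfolding Q_def[symmetric] r_def[symmetric]
        by (simp add: Phi.simps(2)[of lam "Suc n"] Phi.simps(2)[of lam n] Q_def)
    next
      case F2: False
      show ?thesis
      proof (cases "y \<le> 2/3")
        case True
        have "0 \<le> Phi lam (Suc n) (m - 6*lam*Q) (6*y-3) - Phi lam n (m - 6*lam*Q) (6*y-3) \<and>
          Phi lam (Suc n) (m - 6*lam*Q) (6*y-3) - Phi lam n (m - 6*lam*Q) (6*y-3) \<le> lam * sqrt(1+(m - 6*lam*Q)^2) * r ^ n"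
          using Suc.IH[of "6*y-3" "m - 6*lam*Q"] Suc.prems True F2 unfolding r_def by auto
        then show ?thesis using True F1 F2 key[OF m2] unfolding Q_def[symmetric] r_def[symmetric]
          by (simp add: Phi.simps(2)[of lam "Suc n"] Phi.simps(2)[of lam n] Q_def)
      next
        case F3: False
        have "0 \<le> Phi lam (Suc n) m (3*y-2) - Phi lam n m (3*y-2) \<and>
          Phi lam (Suc n) m (3*y-2) - Phi lam n m (3*y-2) \<le> lam * Q * r ^ n"
          using Suc.IH[of "3*y-2" m] Suc.prems F3 unfolding Q_def r_def by auto
        then show ?thesis using F1 F2 F3 k3 unfolding Q_def[symmetric] r_def[symmetric]
          by (simp add: Phi.simps(2)[of lam "Suc n"] Phi.simps(2)[of lam n])
      qed
    qed
  qed
qed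

lemma Phi_mono: assumes "0 \<le> lam" "0 \<le> y" "y \<le> 1" "n \<le> k"
  shows "Phi lam n m y \<le> Phi lam k m y"
  using assms(4)
proof (induction k rule: dec_induct)
  case (step k)
  then show ?case using Phi_inc[OF assms(1), of y k m] assms by linarith
qed simp

lemma rho_lt: "lam < 5/6 \<Longrightarrow> rho lam < 1" by (simp add: rho_def)

lemma Phi_bound: assumes "0 \<le> lam" "lam < 5/6" "0 \<le> y" "y \<le> 1"
  shows "Phi lam n 0 y \<le> lam / (1 - rho lam)"
proof -
  define r where "r = rho lam"
  have r: "r < 1" "0 \<le> r" using rho_lt assms r_def by (auto simp: rho_def)
  have "Phi lam n 0 y \<le> lam / (1 - r) * (1 - r^n)"
  proof (induction n)
    case 0 then show ?case by simp
  next
    case (Suc n)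
    have "Phi lam (Suc n) 0 y \<le> Phi lam n 0 y + lam * r^n"
      using Phi_inc[OF assms(1), of y n 0] assms unfolding r_def by simp
    also have "\<dots> \<le> lam / (1 - r) * (1 - r^n) + lam * r^n" using Suc by simp
    also have "\<dots> = lam / (1 - r) * (1 - r^Suc n)" using r by (simp add: field_simps)
    finally show ?case .
  qed
  also have "\<dots> \<le> lam / (1 - r) * 1" using r assms by (intro mult_left_mono) auto
  finally show ?thesis unfolding r_def by simp
qed

lemma u_Suc: "u (Suc k) t = u k (T t)" unfolding u_def by (simp only: funpow_Suc_right o_apply)
lemma ut_Suc: "ut (Suc k) t = ut k (T t)" unfolding ut_def by (simp only: funpow_Suc_right o_apply)
lemma u_0: "u 0 t = U t" unfolding u_def by simp
lemma ut_0: "ut 0 t = Ut t" unfolding ut_def by simp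

lemma beta_Suc: "beta i t (Suc n) = (if U t = i then 1 else 0) + beta i (T t) n"
proof -
  have eq: "{k. k < Suc n \<and> u k t = i} = (if U t = i then {0} else {}) \<union> Suc ` {k. k < n \<and> u k (T t) = i}"
  proof (intro set_eqI iffI)
    fix k assume "k \<in> {k. k < Suc n \<and> u k t = i}"
    then show "k \<in> (if U t = i then {0} else {}) \<union> Suc ` {k. k < n \<and> u k (T t) = i}"
      by (cases k) (auto simp: u_Suc u_0)
  next
    fix k assume "k \<in> (if U t = i then {0} else {}) \<union> Suc ` {k. k < n \<and> u k (T t) = i}"
    then show "k \<in> {k. k < Suc n \<and> u k t = i}"
      by (auto simp: u_Suc u_0 split: if_splits)
  qed
  have fin: "finite (Suc ` {k. k < n \<and> u k (T t) = i})" by simp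
  have "card (Suc ` {k. k < n \<and> u k (T t) = i}) = beta i (T t) n"
    unfolding beta_def by (simp add: card_image)
  then show ?thesis unfolding beta_def[of i t "Suc n"] eq using fin by auto
qed

lemma beta_0: "beta i t 0 = 0" unfolding beta_def by simp

lemma U_cases: "U t = 0 \<or> U t = 1 \<or> U t = 2 \<or> U t = 3" unfolding U_def by auto

lemma eps_Suc: "eps t (Suc n) = (if U t = 2 then -1 else 1) * eps (T t) n"
  unfolding eps_def beta_Suc by (auto simp: power_add)

lemma ell_Suc: "ell t (Suc n) = (if U t = 0 \<or> U t = 3 then 1/3 else 1/6) * ell (T t) n"
  using U_cases[of t] unfolding ell_def beta_Suc by (auto simp: power_add)

lemma eps_0: "eps t 0 = 1" unfolding eps_def beta_0 by simp
lemma ell_0: "ell t 0 = 1" unfolding ell_def beta_0 by simp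

lemma a_Suc: "a (Suc n) t = Ut t + (if U t = 2 then -1 else 1) * (if U t = 0 \<or> U t = 3 then 1/3 else 1/6) * a n (T t)"
proof -
  have "a (Suc n) t = ut 0 t * eps t 0 * ell t 0 + (\<Sum>k<n. ut (Suc k) t * eps t (Suc k) * ell t (Suc k))"
    unfolding a_def by (rule sum.lessThan_Suc_shift)
  also have "\<dots> = Ut t + (\<Sum>k<n. ((if U t = 2 then -1 else 1) * (if U t = 0 \<or> U t = 3 then 1/3 else 1/6)) * (ut k (T t) * eps (T t) k * ell (T t) k))"
    unfolding ut_Suc eps_Suc ell_Suc eps_0 ell_0 ut_0 by (simp add: algebra_simps)
  also have "\<dots> = Ut t + (if U t = 2 then -1 else 1) * (if U t = 0 \<or> U t = 3 then 1/3 else 1/6) * a n (T t)"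
    unfolding a_def sum_distrib_left[symmetric] by simp
  finally show ?thesis .
qed

lemma eps_ell_nz: "eps t n * ell t n \<noteq> 0"
  unfolding eps_def ell_def by simp

lemma notE_T: "t \<notin> E \<Longrightarrow> T t \<notin> E"
proof -
  assume t: "t \<notin> E"
  show "T t \<notin> E"
  proof
    assume "T t \<in> E"
    then obtain N where "(\<forall>k\<ge>N. u k (T t) = 0) \<or> (\<forall>k\<ge>N. u k (T t) = 3)" unfolding E_def by blast
    then have "(\<forall>k\<ge>Suc N. u k t = 0) \<or> (\<forall>k\<ge>Suc N. u k t = 3)"
      by (metis Suc_le_D Suc_le_mono u_Suc)
    then show False using t unfolding E_def by blast
  qed
qed

lemma T_0: "(T ^^ k) 0 = 0" by (induction k) (auto simp: T_def)
lemma T_1: "(T ^^ k) 1 = 1" by (induction k) (auto simp: T_def)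

lemma notE_01: "t \<notin> E \<Longrightarrow> t \<noteq> 0 \<and> t \<noteq> 1"
proof
  assume t: "t \<notin> E"
  show "t \<noteq> 0"
  proof
    assume "t = 0"
    then have "\<forall>k\<ge>0. u k t = 0" by (simp add: u_def T_0 U_def)
    then show False using t unfolding E_def by blast
  qed
  show "t \<noteq> 1"
  proof
    assume "t = 1"
    then have "\<forall>k\<ge>0. u k t = 3" by (simp add: u_def T_1 U_def)
    then show False using t unfolding E_def by blast
  qed
qed

lemma T_range: "0 \<le> t \<Longrightarrow> t \<le> 1 \<Longrightarrow> 0 \<le> T t \<and> T t \<le> 1"
  unfolding T_def by auto

lemma child:
  assumes reg: "\<And>k z. 0 \<le> z \<Longrightarrow> z \<le> 1 \<Longrightarrow> 0 \<le> ca + cb * z \<and> ca + cb * z \<le> 1 \<and>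
      Phi lam (Suc k) m (ca + cb * z) = al + be * Phi lam k mu z"
  and R': "0 \<le> R'" and s0: "0 < s0" "s0 < 1" and t': "t' = A' + D' * s0"
  and be: "0 \<le> be"
  and aff: "\<forall>s\<in>{0..1}. A' + D' * s \<in> {0..1} \<and> Phi lam n mu (A' + D' * s) = Phi lam n mu A' + R' * s"
  and per: "\<forall>k\<ge>n. Phi lam k mu A' = Phi lam n mu A'"
  and A: "A = ca + cb * A'" and D: "D = cb * D'" and t: "t = ca + cb * t'"
  shows "\<exists>R s0. 0 \<le> R \<and> 0 < s0 \<and> s0 < 1 \<and> t = A + D * s0 \<and>
    (\<forall>s\<in>{0..1}. A + D * s \<in> {0..1} \<and> Phi lam (Suc n) m (A + D * s) = Phi lam (Suc n) m A + R * s) \<and>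
    (\<forall>k\<ge>Suc n. Phi lam k m A = Phi lam (Suc n) m A)"
proof -
  have h1: "0 \<le> be * R'" using be R' by simp
  have h2: "t = A + D * s0" unfolding t t' A D by (simp add: algebra_simps)
  have A01: "0 \<le> A' \<and> A' \<le> 1" using aff[rule_format, of 0] by simp
  have PA: "Phi lam (Suc k) m A = al + be * Phi lam k mu A'" for k
    using reg[of A' k] A01 A by simp
  have h3: "\<forall>s\<in>{0..1}. A + D * s \<in> {0..1} \<and> Phi lam (Suc n) m (A + D * s) = Phi lam (Suc n) m A + be * R' * s"
  proof
    fix s :: real assume s: "s \<in> {0..1}"
    define z where "z = A' + D' * s"
    have z: "0 \<le> z" "z \<le> 1" "Phi lam n mu z = Phi lam n mu A' + R' * s" using aff s unfolding z_def by auto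
    have eq: "A + D * s = ca + cb * z" unfolding z_def A D by (simp add: algebra_simps)
    have r: "0 \<le> ca + cb * z \<and> ca + cb * z \<le> 1 \<and> Phi lam (Suc n) m (ca + cb * z) = al + be * Phi lam n mu z"
      using reg[OF z(1) z(2)] .
    show "A + D * s \<in> {0..1} \<and> Phi lam (Suc n) m (A + D * s) = Phi lam (Suc n) m A + be * R' * s"
      unfolding eq using r z(3) PA[of n] by (simp add: algebra_simps)
  qed
  have h4: "\<forall>k\<ge>Suc n. Phi lam k m A = Phi lam (Suc n) m A"
  proof (intro allI impI)
    fix k assume k: "Suc n \<le> k"
    obtain k' where k'1: "k = Suc k'" using k Suc_le_D by blast
    have k'2: "n \<le> k'" using k k'1 by simp
    show "Phi lam k m A = Phi lam (Suc n) m A" unfolding k'1 PA using per[rule_format, OF k'2] by simp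
  qed
  show ?thesis
    by (rule exI[of _ "be * R'"], rule exI[of _ s0]) (intro conjI h1 h2 h3 h4 s0)
qed

lemma claim:
  assumes lam: "1/6 \<le> lam"
  shows "0 \<le> m \<Longrightarrow> 0 \<le> t \<Longrightarrow> t \<le> 1 \<Longrightarrow> t \<notin> E \<Longrightarrow> \<exists>R s0. 0 \<le> R \<and> 0 < s0 \<and> s0 < 1 \<and>
    t = a n t + eps t n * ell t n * s0 \<and>
    (\<forall>s\<in>{0..1}. a n t + eps t n * ell t n * s \<in> {0..1} \<and>
       Phi lam n m (a n t + eps t n * ell t n * s) = Phi lam n m (a n t) + R* s) \<and>
    (\<forall>k\<ge>n. Phi lam k m (a n t) = Phi lam n m (a n t))"
proof (induction n arbitrary: m t)
  case 0
  have t: "0 < t" "t < 1" using notE_01[OF 0(4)] 0 by auto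
  have a0: "a 0 t = 0" unfolding a_def by simp
  show ?case
    by (rule exI[of _ m], rule exI[of _ t]) (use t 0 a0 Phi_01 in \<open>auto simp: eps_0 ell_0\<close>)
next
  case (Suc n)
  define S where "S = lam * sqrt(1+m^2)"
  have T01: "0 \<le> T t" "T t \<le> 1" using T_range Suc.prems by auto
  have TE: "T t \<notin> E" using notE_T Suc.prems by auto
  have IHg: "\<exists>R s0. 0 \<le> R \<and> 0 < s0 \<and> s0 < 1 \<and>
    T t = a n (T t) + eps (T t) n * ell (T t) n * s0 \<and>
    (\<forall>s\<in>{0..1}. a n (T t) + eps (T t) n * ell (T t) n * s \<in> {0..1} \<and>
       Phi lam n mu (a n (T t) + eps (T t) n * ell (T t) n * s) = Phi lam n mu (a n (T t)) + R* s) \<and>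
    (\<forall>k\<ge>n. Phi lam k mu (a n (T t)) = Phi lam n mu (a n (T t)))" if "0 \<le> mu" for mu
    using Suc.IH[OF that T01 TE] .
  define A' where "A' = a n (T t)"
  define D' where "D' = eps (T t) n * ell (T t) n"
  have aS: "a (Suc n) t = Ut t + (if U t = 2 then -1 else 1) * (if U t = 0 \<or> U t = 3 then 1/3 else 1/6) * A'"
    unfolding A'_def by (rule a_Suc)
  have dS: "eps t (Suc n) * ell t (Suc n) = ((if U t = 2 then -1 else 1) * (if U t = 0 \<or> U t = 3 then 1/3 else 1/6)) * D'"
    unfolding D'_def eps_Suc ell_Suc by simp
  show ?case
  proof (cases "t < 1/3")
    case True
    have U: "U t = 0" "Ut t = 0" "T t = 3*t" using True by (auto simp: U_def Ut_def T_def)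
    obtain R' s0 where IH: "0 \<le> R'" "0 < s0" "s0 < 1" "T t = A' + D'* s0"
      "\<forall>s\<in>{0..1}. A' + D'* s \<in> {0..1} \<and> Phi lam n m (A' + D'* s) = Phi lam n m A' + R'* s"
      "\<forall>k\<ge>n. Phi lam k m A' = Phi lam n m A'"
      using IHg[OF Suc.prems(1)] unfolding A'_def[symmetric] D'_def[symmetric] by blast
    have "\<exists>R s0. 0 \<le> R \<and> 0 < s0 \<and> s0 < 1 \<and> t = a (Suc n) t + (eps t (Suc n) * ell t (Suc n))* s0 \<and>
      (\<forall>s\<in>{0..1}. a (Suc n) t + (eps t (Suc n) * ell t (Suc n))* s \<in> {0..1} \<and> Phi lam (Suc n) m (a (Suc n) t + (eps t (Suc n) * ell t (Suc n))* s) = Phi lam (Suc n) m (a (Suc n) t) + R* s) \<and>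
      (\<forall>k\<ge>Suc n. Phi lam k m (a (Suc n) t) = Phi lam (Suc n) m (a (Suc n) t))"
    proof (rule child[where ca=0 and cb="1/3" and al=0 and be="1/3" and mu=m, OF _ IH(1-4) _ IH(5-6)])
      fix k and z :: real assume z: "0 \<le> z" "z \<le> 1"
      show "0 \<le> 0 + 1/3*z \<and> 0 + 1/3*z \<le> 1 \<and> Phi lam (Suc k) m (0 + 1/3*z) = 0 + 1/3 * Phi lam k m z"
        using z Phi_r1[where t="0 + 1/3*z" and n=k and lam=lam and m=m] by simp
    qed (use aS dS U in \<open>auto simp: field_simps\<close>)
    then show ?thesis .
  next
    case F1: False
    show ?thesis
    proof (cases "t < 1/2")
      case True
      have U: "U t = 1" "Ut t = 1/3" "T t = 6*t-2" using True F1 by (auto simp: U_def Ut_def T_def)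
      define mu where "mu = m + 6*lam * sqrt(1+m^2)"
      have mu: "0 \<le> mu" unfolding mu_def using lam Suc.prems by simp
      obtain R' s0 where IH: "0 \<le> R'" "0 < s0" "s0 < 1" "T t = A' + D'* s0"
        "\<forall>s\<in>{0..1}. A' + D'* s \<in> {0..1} \<and> Phi lam n mu (A' + D'* s) = Phi lam n mu A' + R'* s"
        "\<forall>k\<ge>n. Phi lam k mu A' = Phi lam n mu A'"
        using IHg[OF mu] unfolding A'_def[symmetric] D'_def[symmetric] by blast
      have "\<exists>R s0. 0 \<le> R \<and> 0 < s0 \<and> s0 < 1 \<and> t = a (Suc n) t + (eps t (Suc n) * ell t (Suc n))* s0 \<and>
        (\<forall>s\<in>{0..1}. a (Suc n) t + (eps t (Suc n) * ell t (Suc n))* s \<in> {0..1} \<and> Phi lam (Suc n) m (a (Suc n) t + (eps t (Suc n) * ell t (Suc n))* s) = Phi lam (Suc n) m (a (Suc n) t) + R* s) \<and>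
        (\<forall>k\<ge>Suc n. Phi lam k m (a (Suc n) t) = Phi lam (Suc n) m (a (Suc n) t))"
      proof (rule child[where ca="1/3" and cb="1/6" and al="m/3" and be="1/6" and mu=mu, OF _ IH(1-4) _ IH(5-6)])
        fix k and z :: real assume z: "0 \<le> z" "z \<le> 1"
        have e: "6*(1/3 + 1/6*z) - 2 = z" by simp
        show "0 \<le> 1/3 + 1/6*z \<and> 1/3 + 1/6*z \<le> 1 \<and> Phi lam (Suc k) m (1/3 + 1/6*z) = m/3 + 1/6 * Phi lam k mu z"
          using z Phi_r2[where t="1/3 + 1/6*z" and n=k and lam=lam and m=m] unfolding e mu_def by simp
      qed (use aS dS U in \<open>auto simp: field_simps\<close>)
      then show ?thesis .
    next
      case F2: False
      show ?thesis
      proof (cases "t < 2/3")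
        case True
        have U: "U t = 2" "Ut t = 2/3" "T t = 4-6*t" using True F2 by (auto simp: U_def Ut_def T_def)
        define m2 where "m2 = m - 6*lam * sqrt(1+m^2)"
        define mu where "mu = - m2"
        have mu: "0 \<le> mu"
        proof -
          have "m \<le> sqrt(1+m^2)" using real_sqrt_le_mono[of "m^2" "1+m^2"] by simp
          also have "\<dots> = 1 * sqrt(1+m^2)" by simp
          also have "\<dots> \<le> (6*lam) * sqrt(1+m^2)" using lam by (intro mult_right_mono) auto
          finally show ?thesis unfolding mu_def m2_def by simp
        qed
        obtain R' s0 where IH: "0 \<le> R'" "0 < s0" "s0 < 1" "T t = A' + D'* s0"
          "\<forall>s\<in>{0..1}. A' + D'* s \<in> {0..1} \<and> Phi lam n mu (A' + D'* s) = Phi lam n mu A' + R'* s"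
          "\<forall>k\<ge>n. Phi lam k mu A' = Phi lam n mu A'"
          using IHg[OF mu] unfolding A'_def[symmetric] D'_def[symmetric] by blast
        have "\<exists>R s0. 0 \<le> R \<and> 0 < s0 \<and> s0 < 1 \<and> t = a (Suc n) t + (eps t (Suc n) * ell t (Suc n))* s0 \<and>
          (\<forall>s\<in>{0..1}. a (Suc n) t + (eps t (Suc n) * ell t (Suc n))* s \<in> {0..1} \<and> Phi lam (Suc n) m (a (Suc n) t + (eps t (Suc n) * ell t (Suc n))* s) = Phi lam (Suc n) m (a (Suc n) t) + R* s) \<and>
          (\<forall>k\<ge>Suc n. Phi lam k m (a (Suc n) t) = Phi lam (Suc n) m (a (Suc n) t))"
        proof (rule child[where ca="2/3" and cb="-1/6" and al="m/2 + lam * sqrt(1+m^2) + m2/6" and be="1/6" and mu=mu, OF _ IH(1-4) _ IH(5-6)])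
          fix k and z :: real assume z: "0 \<le> z" "z \<le> 1"
          have e: "6*(2/3 + -1/6*z) - 3 = 1 - z" by simp
          have sy: "Phi lam k m2 (1 - z) = m2 + Phi lam k mu z" unfolding mu_def using Phi_sym z by simp
          show "0 \<le> 2/3 + -1/6*z \<and> 2/3 + -1/6*z \<le> 1 \<and> Phi lam (Suc k) m (2/3 + -1/6*z) = m/2 + lam * sqrt(1+m^2) + m2/6 + 1/6 * Phi lam k mu z"
            using z Phi_r3[where t="2/3 + -1/6*z" and n=k and lam=lam and m=m] unfolding e m2_def[symmetric] sy
            by simp
        qed (use aS dS U in \<open>auto simp: field_simps\<close>)
        then show ?thesis .
      next
        case F3: False
        have U: "U t = 3" "Ut t = 2/3" "T t = 3*t-2" using F3 F2 by (auto simp: U_def Ut_def T_def)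
        obtain R' s0 where IH: "0 \<le> R'" "0 < s0" "s0 < 1" "T t = A' + D'* s0"
          "\<forall>s\<in>{0..1}. A' + D'* s \<in> {0..1} \<and> Phi lam n m (A' + D'* s) = Phi lam n m A' + R'* s"
          "\<forall>k\<ge>n. Phi lam k m A' = Phi lam n m A'"
          using IHg[OF Suc.prems(1)] unfolding A'_def[symmetric] D'_def[symmetric] by blast
        have "\<exists>R s0. 0 \<le> R \<and> 0 < s0 \<and> s0 < 1 \<and> t = a (Suc n) t + (eps t (Suc n) * ell t (Suc n))* s0 \<and>
          (\<forall>s\<in>{0..1}. a (Suc n) t + (eps t (Suc n) * ell t (Suc n))* s \<in> {0..1} \<and> Phi lam (Suc n) m (a (Suc n) t + (eps t (Suc n) * ell t (Suc n))* s) = Phi lam (Suc n) m (a (Suc n) t) + R* s) \<and>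
          (\<forall>k\<ge>Suc n. Phi lam k m (a (Suc n) t) = Phi lam (Suc n) m (a (Suc n) t))"
        proof (rule child[where ca="2/3" and cb="1/3" and al="2*m/3" and be="1/3" and mu=m, OF _ IH(1-4) _ IH(5-6)])
          fix k and z :: real assume z: "0 \<le> z" "z \<le> 1"
          have e: "3*(2/3 + 1/3*z) - 2 = z" by simp
          show "0 \<le> 2/3 + 1/3*z \<and> 2/3 + 1/3*z \<le> 1 \<and> Phi lam (Suc k) m (2/3 + 1/3*z) = 2*m/3 + 1/3 * Phi lam k m z"
            using z Phi_r4[where t="2/3 + 1/3*z" and n=k and lam=lam and m=m] unfolding e by simp
        qed (use aS dS U in \<open>auto simp: field_simps\<close>)
        then show ?thesis .
      qed
    qed
  qed
qed

theorem proposition3p10: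
  fixes lam :: real and n :: nat and x :: real
  assumes "1/6 < lam" and "lam < 5/6"
    and "x \<in> {0..1}" and "x \<notin> E"
  shows "\<bar>F lam x - F lam (a n x)\<bar> \<ge> \<bar>slope_n lam n x\<bar> * \<bar>x - a n x\<bar>"
proof -
  have lam0: "0 \<le> lam" "1/6 \<le> lam" using assms by auto
  have x01: "0 \<le> x" "x \<le> 1" using assms by auto
  define A where "A = a n x"
  define D where "D = eps x n * ell x n"
  obtain R s0 where R: "0 \<le> R" "0 < s0" "s0 < 1" "x = A + D * s0"
    and aff: "\<forall>s\<in>{0..1}. A + D * s \<in> {0..1} \<and> Phi lam n 0 (A + D * s) = Phi lam n 0 A + R * s"
    and per: "\<forall>k\<ge>n. Phi lam k 0 A = Phi lam n 0 A"
  proof -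
    have c0: "0 \<le> (0::real)" by simp
    show ?thesis using claim[OF lam0(2) c0 x01(1) x01(2) assms(4), where n=n] that
      unfolding A_def[symmetric] D_def[symmetric] by blast
  qed
  have D0: "D \<noteq> 0" using eps_ell_nz D_def by simp
  have A01: "0 \<le> A" "A \<le> 1" using aff[rule_format, of 0] by auto
  define X where "X = (\<lambda>k. Fn lam k x)"
  have X: "X k = Phi lam k 0 x" for k using Fn_Phi x01 X_def by simp
  have inc: "incseq X"
  proof (rule incseq_SucI)
    fix k show "X k \<le> X (Suc k)" unfolding X using Phi_inc[OF lam0(1) x01, of k 0] by simp
  qed
  have bdd: "bdd_above (range X)"
    by (rule bdd_aboveI2[where M="lam / (1 - rho lam)"]) (use X Phi_bound lam0 assms(2) x01 in auto)
  have conv: "X \<longlonglongrightarrow> Sup (range X)" by (rule LIMSEQ_incseq_SUP[OF bdd inc])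
  have Fx: "F lam x = Sup (range X)" unfolding F_def X_def[symmetric] using conv by (rule limI)
  have le: "Phi lam n 0 x \<le> F lam x" using incseq_le[OF inc conv, of n] Fx X by simp
  have convA: "(\<lambda>k. Fn lam k A) \<longlonglongrightarrow> Phi lam n 0 A"
  proof (rule tendsto_eventually)
    show "\<forall>\<^sub>F k in sequentially. Fn lam k A = Phi lam n 0 A"
    proof (rule eventually_sequentiallyI[of n])
      fix k assume k: "n \<le> k"
      have "Phi lam k 0 A = Phi lam n 0 A" using per k by blast
      then show "Fn lam k A = Phi lam n 0 A" using Fn_Phi[OF A01] by simp
    qed
  qed
  have FA: "F lam A = Phi lam n 0 A" unfolding F_def using convA by (rule limI)
  define g where "g = (\<lambda>y. Phi lam n 0 A + R * ((y - A) / D))"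
  have gd: "(g has_field_derivative R / D) (at x)"
    unfolding g_def using D0 by (auto intro!: derivative_eq_intros)
  define del where "del = \<bar>D\<bar> * min s0 (1 - s0)"
  have del: "0 < del" unfolding del_def using D0 R by simp
  have eqg: "g y = Fn lam n y" if y: "y \<in> ball x del" for y
  proof -
    define s where "s = (y - A) / D"
    have ys: "y = A + D * s" unfolding s_def using D0 by simp
    have "s - s0 = (y - x) / D" unfolding s_def using R(4) D0 by (simp add: field_simps)
    then have "\<bar>s - s0\<bar> = \<bar>y - x\<bar> / \<bar>D\<bar>" by (simp add: abs_divide)
    also have "\<dots> < min s0 (1 - s0)"
    proof -
      have "\<bar>y - x\<bar> < \<bar>D\<bar> * min s0 (1 - s0)" using y unfolding del_def by (simp add: dist_real_def abs_minus_commute)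
      then have h: "\<bar>y - x\<bar> < min s0 (1 - s0) * \<bar>D\<bar>" by (metis mult.commute)
      have Dp: "0 < \<bar>D\<bar>" using D0 by simp
      show ?thesis unfolding pos_divide_less_eq[OF Dp] by (rule h)
    qed
    finally have s: "0 \<le> s" "s \<le> 1" by auto
    have "Fn lam n y = Phi lam n 0 y" using aff s ys Fn_Phi[of y lam n] by auto
    also have "\<dots> = Phi lam n 0 A + R * s" using aff s ys by auto
    finally show ?thesis unfolding g_def s_def by simp
  qed
  have "(Fn lam n has_field_derivative R / D) (at x)"
    by (rule has_field_derivative_transform_within_open[OF gd open_ball]) (use del eqg in auto)
  then have sl: "slope_n lam n x = R / D" unfolding slope_n_def by (rule DERIV_imp_deriv)
  have Fnx: "Phi lam n 0 x = Phi lam n 0 A + R * s0" using aff[rule_format, of s0] R by auto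
  have e: "slope_n lam n x * (x - A) = R * s0" unfolding sl using R(4) D0 by simp
  have "\<bar>slope_n lam n x\<bar> * \<bar>x - A\<bar> = \<bar>slope_n lam n x * (x - A)\<bar>" by (rule abs_mult[symmetric])
  also have "\<dots> = R * s0" unfolding e using R by simp
  also have "\<dots> \<le> F lam x - F lam A" using le FA Fnx by simp
  also have "\<dots> \<le> \<bar>F lam x - F lam A\<bar>" by simp
  finally show ?thesis unfolding A_def .
qed

end
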